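(* Let $k>l\ge0$ be integers, $\xi\in\mathbb{C}$, and $f:\mathbb{N}\to[0,\infty)$. Assume there exist $\kappa>0$ and $N\in\mathbb{N}$ such that $f(n)\ge\kappa|\xi|\beta^{kl}_n$ for all $n\ge N$. Then for all $\psi\in\mathcal{D}_0$, $$\|\xi(a^\dagger)^ka^l\psi+\xi^*(a^\dagger)^la^k\psi\|\le\frac{2}{\kappa}\|f(a^\dagger a)\psi\|+2|\xi|\beta^{kl}_{N-1}\|\psi\|.$$
   Context: $\mathbb{N}=\{0,1,2,\dots\}$. $\mathcal{H}$ is a separable complex Hilbert space with orthonormal basis $(\phi_n)_{n\in\mathbb{N}}$; $\mathcal{D}_0$ is the set of finite linear combinations of the $\phi_n$. The operators $a,a^\dagger$ have domain $\mathcal{D}_0$ and act by $a\phi_n=\sqrt{n}\,\phi_{n-1}$ ($a\phi_0=0$), $a^\dagger\phi_n=\sqrt{n+1}\,\phi_{n+1}$, extended linearly. $f(a^\dagger a)$ has domain $\mathcal{D}_0$ and $f(a^\dagger a)\phi_n=f(n)\phi_n$. For integers $x$ and $s\ge0$, $(x,s)=x(x+1)\cdots(x+s-1)$ ($=1$ if $s=0$), with the convention $(x,s)=0$ whenever $x$ is a negative integer; for integers $n$ and $k,l\ge0$, $\beta^{kl}_n=\sqrt{(n-l+1,l)(n-l+1,k)}$. *)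

theory Defs
  imports "HOL-Analysis.Analysis"
begin

text \<open>The Hilbert space H with orthonormal basis (phi_n) is represented by coordinates:
 a vector psi in D_0 is its finitely supported coefficient sequence c (psi = sum c n phi_n).\<close>

definition fin_supp :: "(nat \<Rightarrow> complex) \<Rightarrow> bool" where
  "fin_supp c \<longleftrightarrow> finite {n. c n \<noteq> 0}"

definition lnorm :: "(nat \<Rightarrow> complex) \<Rightarrow> real" where
  "lnorm c = sqrt (\<Sum>n\<in>{n. c n \<noteq> 0}. (cmod (c n))\<^sup>2)"

text \<open>annihilation: a phi_n = sqrt n phi_(n-1); coefficient of phi_n in a psi is sqrt(n+1) c(n+1)\<close>
definition ann :: "(nat \<Rightarrow> complex) \<Rightarrow> (nat \<Rightarrow> complex)" where
  "ann c = (\<lambda>n. complex_of_real (sqrt (real (n + 1))) * c (n + 1))"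

text \<open>creation: a^dagger phi_n = sqrt(n+1) phi_(n+1)\<close>
definition cre :: "(nat \<Rightarrow> complex) \<Rightarrow> (nat \<Rightarrow> complex)" where
  "cre c = (\<lambda>n. if n = 0 then 0 else complex_of_real (sqrt (real n)) * c (n - 1))"

text \<open>f(a^dagger a) phi_n = f(n) phi_n\<close>
definition fnum :: "(nat \<Rightarrow> real) \<Rightarrow> (nat \<Rightarrow> complex) \<Rightarrow> (nat \<Rightarrow> complex)" where
  "fnum f c = (\<lambda>n. complex_of_real (f n) * c n)"

definition rpoch :: "int \<Rightarrow> nat \<Rightarrow> real" where
  "rpoch x s = (if x < 0 then 0 else (\<Prod>i<s. real_of_int (x + int i)))"

definition beta :: "nat \<Rightarrow> nat \<Rightarrow> int \<Rightarrow> real" where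
  "beta k l n = sqrt (rpoch (n - int l + 1) l * rpoch (n - int l + 1) k)"

end

theory Submission
  imports Defs
begin

lemma ann_pow: "(ann ^^ j) c n = complex_of_real (sqrt (\<Prod>i<j. real (n+1+i))) * c (n+j)"
proof (induction j arbitrary: c)
  case 0 then show ?case by simp
next
  case (Suc j)
  have "(ann ^^ Suc j) c n = (ann ^^ j) (ann c) n" by (simp only: funpow_Suc_right comp_def)
  also have "\<dots> = complex_of_real (sqrt (\<Prod>i<j. real (n+1+i))) * ann c (n+j)"
    by (rule Suc.IH)
  also have "ann c (n+j) = complex_of_real (sqrt (real (n+1+j))) * c (n+Suc j)"
    by (simp add: ann_def)
  also have "(\<Prod>i<Suc j. real (n+1+i)) = (\<Prod>i<j. real (n+1+i)) * real (n+1+j)"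
    by (rule prod.lessThan_Suc)
  ultimately show ?case
    by (simp only: real_sqrt_mult of_real_mult mult.assoc)
qed

lemma cre_pow: "(cre ^^ j) c n = (if n < j then 0 else complex_of_real (sqrt (\<Prod>i<j. real (n - i))) * c (n - j))"
proof (induction j arbitrary: c)
  case 0 then show ?case by simp
next
  case (Suc j)
  have "(cre ^^ Suc j) c n = (cre ^^ j) (cre c) n" by (simp only: funpow_Suc_right comp_def)
  also have "\<dots> = (if n < j then 0 else complex_of_real (sqrt (\<Prod>i<j. real (n - i))) * cre c (n - j))"
    by (rule Suc.IH)
  also have "\<dots> = (if n < Suc j then 0 else complex_of_real (sqrt (\<Prod>i<Suc j. real (n - i))) * c (n - Suc j))"
  proof (cases "n < Suc j")
    case True
    then show ?thesis by (auto simp: cre_def)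
  next
    case False
    then have "cre c (n - j) = complex_of_real (sqrt (real (n - j))) * c (n - Suc j)"
      by (simp add: cre_def)
    moreover have "(\<Prod>i<Suc j. real (n - i)) = (\<Prod>i<j. real (n - i)) * real (n - j)"
      by (rule prod.lessThan_Suc)
    ultimately show ?thesis using False
      by (simp only: real_sqrt_mult of_real_mult mult.assoc if_False) simp
  qed
  finally show ?case .
qed

lemma rpoch_nonneg: "rpoch x s \<ge> 0"
  unfolding rpoch_def by (auto intro!: prod_nonneg)

lemma rpoch_mono: "x \<le> y \<Longrightarrow> rpoch x s \<le> rpoch y s"
  unfolding rpoch_def by (auto intro!: prod_nonneg prod_mono)

lemma beta_nonneg: "beta k l x \<ge> 0"
  unfolding beta_def by (simp add: rpoch_nonneg)

lemma beta_mono: "x \<le> y \<Longrightarrow> beta k l x \<le> beta k l y"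
  unfolding beta_def by (intro real_sqrt_le_mono mult_mono rpoch_mono rpoch_nonneg) simp_all

lemma rpoch_zero: "x \<le> 0 \<Longrightarrow> x + int s > 0 \<Longrightarrow> rpoch x s = 0"
proof -
  assume a: "x \<le> 0" "x + int s > 0"
  show ?thesis
  proof (cases "x < 0")
    case True then show ?thesis by (simp add: rpoch_def)
  next
    case False
    then have "x = 0" using a by simp
    then have "0 \<in> {..<s}" using a by auto
    then show ?thesis using \<open>x = 0\<close> by (auto simp: rpoch_def intro!: prod_zero bexI[of _ 0])
  qed
qed

lemma beta_small: "n < l \<Longrightarrow> beta k l (int n) = 0"
  unfolding beta_def using rpoch_zero[of "int n - int l + 1" l] by simp

lemma rpoch_rev: "rpoch (int n + 1) s = (\<Prod>i<s. real (n + s - i))"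
proof -
  have "rpoch (int n + 1) s = (\<Prod>i<s. real (n + 1 + i))" by (simp add: rpoch_def algebra_simps)
  also have "\<dots> = (\<Prod>i<s. real (n + 1 + (s - Suc i)))"
    by (rule prod.nat_diff_reindex[symmetric])
  also have "\<dots> = (\<Prod>i<s. real (n + s - i))"
    by (intro prod.cong) auto
  finally show ?thesis .
qed

lemma lnorm_L2: "finite S \<Longrightarrow> {n. c n \<noteq> 0} \<subseteq> S \<Longrightarrow> lnorm c = L2_set (\<lambda>n. cmod (c n)) S"
  unfolding lnorm_def L2_set_def
  by (intro arg_cong[where f=sqrt] sum.mono_neutral_left) auto

theorem lemma3p4:
  fixes k l N :: nat and \<xi> :: complex and f :: "nat \<Rightarrow> real" and \<kappa> :: real
    and \<psi> :: "nat \<Rightarrow> complex"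
  assumes "l < k"
    and "\<forall>n. f n \<ge> 0"
    and "\<kappa> > 0"
    and "\<forall>n\<ge>N. f n \<ge> \<kappa> * cmod \<xi> * beta k l (int n)"
    and "fin_supp \<psi>"
  shows "lnorm (\<lambda>n. \<xi> * (cre ^^ k) ((ann ^^ l) \<psi>) n + cnj \<xi> * (cre ^^ l) ((ann ^^ k) \<psi>) n)
         \<le> 2 / \<kappa> * lnorm (fnum f \<psi>) + 2 * cmod \<xi> * beta k l (int N - 1) * lnorm \<psi>"
proof -
  define d where "d = k - l"
  define b where "b = (\<lambda>m::nat. beta k l (int m))"
  define T1 where "T1 = (\<lambda>n. \<xi> * (cre ^^ k) ((ann ^^ l) \<psi>) n)"
  define T2 where "T2 = (\<lambda>n. cnj \<xi> * (cre ^^ l) ((ann ^^ k) \<psi>) n)"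
  define G where "G = (\<lambda>m. cmod \<xi> * b m * cmod (\<psi> m))"
  define \<beta>0 where "\<beta>0 = beta k l (int N - 1)"
  have bnn: "b m \<ge> 0" for m by (simp add: b_def beta_nonneg)
  obtain P where P: "{n. \<psi> n \<noteq> 0} \<subseteq> {..<P}"
    using assms(5) finite_nat_bounded unfolding fin_supp_def by blast
  have psi0: "\<psi> m = 0" if "m \<ge> P" for m using P that by force
  have T1a: "T1 (m + d) = \<xi> * b m * \<psi> m" for m
  proof (cases "m < l")
    case True
    then show ?thesis using assms(1) by (simp add: T1_def cre_pow b_def beta_small d_def)
  next
    case False
    have e1: "m + d - k = m - l" using False assms(1) by (simp add: d_def)
    have "beta k l (int m) = sqrt ((\<Prod>i<l. real (m - l + 1 + i)) * (\<Prod>i<k. real (m + d - i)))"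
    proof -
      have "int m - int l + 1 = int (m - l) + 1" using False by simp
      moreover have "rpoch (int (m - l) + 1) k = (\<Prod>i<k. real (m + d - i))"
        unfolding rpoch_rev using False assms(1) by (intro prod.cong) (auto simp: d_def)
      moreover have "rpoch (int (m - l) + 1) l = (\<Prod>i<l. real (m - l + 1 + i))"
        by (simp add: rpoch_def add_ac)
      ultimately show ?thesis unfolding beta_def by (simp only:)
    qed
    then have bm: "b m = sqrt (\<Prod>i<l. real (m - l + 1 + i)) * sqrt (\<Prod>i<k. real (m + d - i))"
      by (simp add: b_def real_sqrt_mult)
    have nlt: "\<not> m + d < k" using False assms(1) by (simp add: d_def)
    have e2: "m - l + l = m" using False by simp
    have "T1 (m + d) = \<xi> * (complex_of_real (sqrt (\<Prod>i<k. real (m + d - i))) *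
        (complex_of_real (sqrt (\<Prod>i<l. real (m - l + 1 + i))) * \<psi> (m - l + l)))"
      unfolding T1_def cre_pow ann_pow if_not_P[OF nlt] e1 ..
    also have "\<dots> = \<xi> * b m * \<psi> m"
      unfolding bm e2 of_real_mult by (simp only: mult_ac)
    finally show ?thesis .
  qed
  have T1b: "T1 n = 0" if "n < d" for n
    using that assms(1) by (simp add: T1_def cre_pow d_def)
  have T2a: "T2 n = cnj \<xi> * b n * \<psi> (n + d)" for n
  proof (cases "n < l")
    case True
    then show ?thesis by (simp add: T2_def cre_pow b_def beta_small)
  next
    case False
    have "beta k l (int n) = sqrt ((\<Prod>i<l. real (n - i)) * (\<Prod>i<k. real (n - l + 1 + i)))"
    proof -
      have "int n - int l + 1 = int (n - l) + 1" using False by simp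
      moreover have "rpoch (int (n - l) + 1) l = (\<Prod>i<l. real (n - i))"
        unfolding rpoch_rev using False by (intro prod.cong) auto
      moreover have "rpoch (int (n - l) + 1) k = (\<Prod>i<k. real (n - l + 1 + i))"
        by (simp add: rpoch_def add_ac)
      ultimately show ?thesis unfolding beta_def by (simp only:)
    qed
    then have bn: "b n = sqrt (\<Prod>i<l. real (n - i)) * sqrt (\<Prod>i<k. real (n - l + 1 + i))"
      by (simp add: b_def real_sqrt_mult)
    have e3: "n - l + k = n + d" using False assms(1) by (simp add: d_def)
    have nlt: "\<not> n < l" using False by simp
    have "T2 n = cnj \<xi> * (complex_of_real (sqrt (\<Prod>i<l. real (n - i))) *
        (complex_of_real (sqrt (\<Prod>i<k. real (n - l + 1 + i))) * \<psi> (n - l + k)))"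
      unfolding T2_def cre_pow ann_pow if_not_P[OF nlt] ..
    also have "\<dots> = cnj \<xi> * b n * \<psi> (n + d)"
      unfolding bn e3 of_real_mult by (simp only: mult_ac)
    finally show ?thesis .
  qed
  define M where "M = P + d"
  have supp: "{n. T1 n + T2 n \<noteq> 0} \<subseteq> {..<M}"
  proof
    fix n assume "n \<in> {n. T1 n + T2 n \<noteq> 0}"
    then have ne: "T1 n + T2 n \<noteq> 0" by simp
    show "n \<in> {..<M}"
    proof (rule ccontr)
      assume "n \<notin> {..<M}"
      then have n: "n \<ge> P + d" by (simp add: M_def)
      have "T1 n = T1 ((n - d) + d)" using n by simp
      also have "\<dots> = 0" unfolding T1a using n psi0 by simp
      finally have "T1 n = 0" .
      moreover have "T2 n = 0" unfolding T2a using n psi0 by simp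
      ultimately show False using ne by simp
    qed
  qed
  have L: "lnorm (\<lambda>n. T1 n + T2 n) = L2_set (\<lambda>n. cmod (T1 n + T2 n)) {..<M}"
    by (rule lnorm_L2[OF _ supp]) simp
  also have "\<dots> \<le> L2_set (\<lambda>n. cmod (T1 n) + cmod (T2 n)) {..<M}"
    by (rule L2_set_mono) (auto simp: norm_triangle_ineq)
  also have "\<dots> \<le> L2_set (\<lambda>n. cmod (T1 n)) {..<M} + L2_set (\<lambda>n. cmod (T2 n)) {..<M}"
    by (rule L2_set_triangle_ineq)
  also have "\<dots> \<le> L2_set G {..<P} + L2_set G {..<P}"
  proof (rule add_mono)
    have "(\<Sum>n<M. (cmod (T1 n))\<^sup>2) = (\<Sum>n\<in>{0+d..<P+d}. (cmod (T1 n))\<^sup>2)"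
      unfolding M_def by (rule sum.mono_neutral_right) (auto simp: T1b)
    also have "\<dots> = (\<Sum>m\<in>{0..<P}. (cmod (T1 (m + d)))\<^sup>2)"
      by (rule sum.shift_bounds_nat_ivl)
    also have "\<dots> = (\<Sum>m<P. (G m)\<^sup>2)"
      unfolding T1a G_def using bnn by (intro sum.cong) (auto simp: norm_mult abs_mult)
    finally show "L2_set (\<lambda>n. cmod (T1 n)) {..<M} \<le> L2_set G {..<P}"
      unfolding L2_set_def by simp
  next
    have "(\<Sum>n<M. (cmod (T2 n))\<^sup>2) \<le> (\<Sum>n<P+d. (G (n + d))\<^sup>2)"
      unfolding M_def
    proof (intro sum_mono)
      fix n
      have "b n \<le> b (n + d)" unfolding b_def by (rule beta_mono) simp
      then have "cmod (T2 n) \<le> G (n + d)"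
        unfolding T2a G_def using bnn
        by (auto simp: norm_mult abs_mult intro!: mult_left_mono mult_right_mono)
      then show "(cmod (T2 n))\<^sup>2 \<le> (G (n + d))\<^sup>2"
        by (intro power_mono) auto
    qed
    also have "\<dots> = (\<Sum>n\<in>{0+d..<P+d+d}. (G n)\<^sup>2)"
      unfolding atLeast0LessThan[symmetric] by (rule sum.shift_bounds_nat_ivl[symmetric])
    also have "\<dots> \<le> (\<Sum>n\<in>{0..<P+d+d}. (G n)\<^sup>2)"
      by (rule sum_mono2) auto
    also have "\<dots> = (\<Sum>n<P. (G n)\<^sup>2)"
      by (rule sum.mono_neutral_right) (auto simp: G_def psi0)
    finally show "L2_set (\<lambda>n. cmod (T2 n)) {..<M} \<le> L2_set G {..<P}"
      unfolding L2_set_def by simp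
  qed
  also have "\<dots> \<le> 2 * (L2_set (\<lambda>m. f m * cmod (\<psi> m) / \<kappa> + cmod \<xi> * \<beta>0 * cmod (\<psi> m)) {..<P})"
  proof -
    have "L2_set G {..<P} \<le> L2_set (\<lambda>m. f m * cmod (\<psi> m) / \<kappa> + cmod \<xi> * \<beta>0 * cmod (\<psi> m)) {..<P}"
    proof (rule L2_set_mono)
      fix m
      show "0 \<le> G m" using bnn by (simp add: G_def)
      have "cmod \<xi> * b m \<le> f m / \<kappa> + cmod \<xi> * \<beta>0"
      proof (cases "m \<ge> N")
        case True
        then have "\<kappa> * (cmod \<xi> * b m) \<le> f m" using assms(4) by (simp add: b_def mult.assoc)
        then have "cmod \<xi> * b m \<le> f m / \<kappa>" using assms(3) by (simp add: field_simps)
        moreover have "0 \<le> cmod \<xi> * \<beta>0" by (simp add: \<beta>0_def beta_nonneg)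
        ultimately show ?thesis by linarith
      next
        case False
        then have "b m \<le> \<beta>0" unfolding b_def \<beta>0_def by (intro beta_mono) simp
        then have "cmod \<xi> * b m \<le> cmod \<xi> * \<beta>0" by (simp add: mult_left_mono)
        moreover have "0 \<le> f m / \<kappa>" using assms(2,3) by simp
        ultimately show ?thesis by linarith
      qed
      then have "cmod \<xi> * b m * cmod (\<psi> m) \<le> (f m / \<kappa> + cmod \<xi> * \<beta>0) * cmod (\<psi> m)"
        by (rule mult_right_mono) simp
      then show "G m \<le> f m * cmod (\<psi> m) / \<kappa> + cmod \<xi> * \<beta>0 * cmod (\<psi> m)"
        by (simp add: G_def algebra_simps)
    qed
    then show ?thesis by simp
  qed
  also have "\<dots> \<le> 2 * (L2_set (\<lambda>m. f m * cmod (\<psi> m) / \<kappa>) {..<P} + L2_set (\<lambda>m. cmod \<xi> * \<beta>0 * cmod (\<psi> m)) {..<P})"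
    by (intro mult_left_mono L2_set_triangle_ineq) simp
  also have "\<dots> = 2 / \<kappa> * lnorm (fnum f \<psi>) + 2 * cmod \<xi> * \<beta>0 * lnorm \<psi>"
  proof -
    have "lnorm (fnum f \<psi>) = L2_set (\<lambda>m. f m * cmod (\<psi> m)) {..<P}"
      using P assms(2) by (subst lnorm_L2[of "{..<P}"]) (auto simp: fnum_def norm_mult)
    moreover have "lnorm \<psi> = L2_set (\<lambda>m. cmod (\<psi> m)) {..<P}"
      using P by (subst lnorm_L2[of "{..<P}"]) auto
    moreover have "L2_set (\<lambda>m. f m * cmod (\<psi> m) / \<kappa>) {..<P} = (1/\<kappa>) * L2_set (\<lambda>m. f m * cmod (\<psi> m)) {..<P}"
      using assms(3) by (subst L2_set_right_distrib) auto
    moreover have "L2_set (\<lambda>m. cmod \<xi> * \<beta>0 * cmod (\<psi> m)) {..<P} = (cmod \<xi> * \<beta>0) * L2_set (\<lambda>m. cmod (\<psi> m)) {..<P}"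
      by (subst L2_set_right_distrib) (auto simp: \<beta>0_def beta_nonneg)
    ultimately show ?thesis by (simp add: algebra_simps)
  qed
  finally show ?thesis unfolding T1_def T2_def \<beta>0_def .
qed

end
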